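(* Let $\Gamma=(H,\iota,\sigma,m)$ be a skew Brauer graph, $H'\subseteq H$ stable under $\iota$, and $(h_1,r_1),(h_2,r_2)$ two distinct maximal sectors of elements of $H'$ in $\Gamma$. For any $0$-homogeneous grading $d:H\to\mathbb{Z}/2\mathbb{Z}$ of $\Gamma$, $$\mu^+_{(h_1,r_1)}\big(\mu^+_{(h_2,r_2)}(\Gamma,d)\big)=\mu^+_{(h_2,r_2)}\big(\mu^+_{(h_1,r_1)}(\Gamma,d)\big).$$
   Context: A skew Brauer graph is $\Gamma=(H,\iota,\sigma,m)$ with $H$ finite, $\iota$ an involution (possibly with fixed points; $H_\times$ = set of fixed points, $H_\circ=H\setminus H_\times$), $\sigma$ a permutation, $m:H\to\mathbb{Z}_{>0}$ constant on $\sigma$-orbits; no half-edge is fixed by both $\iota$ and $\sigma$. A grading $d:H\to\mathbb{Z}/2\mathbb{Z}$ is $0$-homogeneous if $\sum_{h\in v}d(h)=0$ for every $\sigma$-orbit $v$. A sector of elements of $H'$ is a pair $(h,r)\in H\times\mathbb{Z}_{\ge0}$ with $r+1$ the least $r'\ge0$ such that $\sigma^{r'}h\notin H'$; it is maximal if also $\sigma^{-1}h\notin H'$. The graded generalized Kauer move of a sector is $\mu^+_{(h,r)}(\Gamma,d)=(H,\iota,\sigma_{(h,r)},m_{(h,r)},d_{(h,r)})$ where $\sigma_{(h,r)}=(h\ \ \sigma^{r+1}h)\circ\sigma\circ(\sigma^rh\ \ \iota\sigma^{r+1}h)$ (permutations applied right to left), $m_{(h,r)}(\sigma^ih)=m(\iota\sigma^{r+1}h)$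 for $0\le i\le r$, $m_{(h,r)}=m$ elsewhere, and, with $\epsilon=0$ if $\sigma^{r+1}h\in H_\circ$ and $\epsilon=1$ if $\sigma^{r+1}h\in H_\times$: $d_{(h,r)}(\iota\sigma^{r+1}h)=-\sum_{i=0}^rd(\sigma^ih)-\epsilon$; $d_{(h,r)}(\sigma^rh)=d(\iota\sigma^{r+1}h)+d(\sigma^rh)+\epsilon$ if $\iota\sigma^{r+1}h\ne\sigma^{-1}h$, and $=\sum_{i=-1}^rd(\sigma^ih)+d(\sigma^rh)+\epsilon$ otherwise; $d_{(h,r)}(\sigma^{-1}h)=\sum_{i=-1}^rd(\sigma^ih)$ if $\iota\sigma^{r+1}h\ne\sigma^{-1}h$, and $=d_{(h,r)}(\iota\sigma^{r+1}h)$ otherwise; $d_{(h,r)}(h')=d(h')$ for all other $h'$. The result is again a $0$-homogeneous graded skew Brauer graph, and a maximal sector distinct from $(h,r)$ remains a sector after the move, so both sides are defined. *)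

theory Defs
  imports "HOL-Combinatorics.Permutations" "HOL-Library.Z2"
begin

text \<open>Permutations of H are modelled with
  the library notion \<open>permutes\<close> (identity outside H).\<close>

definition skew_brauer_graph ::
  "'a set \<Rightarrow> ('a \<Rightarrow> 'a) \<Rightarrow> ('a \<Rightarrow> 'a) \<Rightarrow> ('a \<Rightarrow> nat) \<Rightarrow> bool" where
  "skew_brauer_graph H \<iota> \<sigma> m \<longleftrightarrow>
     finite H \<and> \<iota> permutes H \<and> (\<forall>h\<in>H. \<iota> (\<iota> h) = h) \<and> \<sigma> permutes H \<and>
     (\<forall>h\<in>H. m h > 0) \<and> (\<forall>h\<in>H. m (\<sigma> h) = m h) \<and>
     (\<forall>h\<in>H. \<not> (\<iota> h = h \<and> \<sigma> h = h))"

definition sigma_orbit :: "('a \<Rightarrow> 'a) \<Rightarrow> 'a \<Rightarrow> 'a set" where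
  "sigma_orbit \<sigma> h = {(\<sigma> ^^ n) h | n. True}"

text \<open>Gradings take values in Z/2Z, represented by the field \<open>bit\<close>.\<close>

definition zero_homogeneous :: "'a set \<Rightarrow> ('a \<Rightarrow> 'a) \<Rightarrow> ('a \<Rightarrow> bit) \<Rightarrow> bool" where
  "zero_homogeneous H \<sigma> d \<longleftrightarrow> (\<forall>h\<in>H. (\<Sum>x\<in>sigma_orbit \<sigma> h. d x) = 0)"

definition is_sector :: "'a set \<Rightarrow> ('a \<Rightarrow> 'a) \<Rightarrow> 'a set \<Rightarrow> 'a \<Rightarrow> nat \<Rightarrow> bool" where
  "is_sector H \<sigma> H' h r \<longleftrightarrow> h \<in> H \<and>
     (\<forall>i\<le>r. (\<sigma> ^^ i) h \<in> H') \<and> (\<sigma> ^^ (Suc r)) h \<notin> H'"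

definition is_maximal_sector :: "'a set \<Rightarrow> ('a \<Rightarrow> 'a) \<Rightarrow> 'a set \<Rightarrow> 'a \<Rightarrow> nat \<Rightarrow> bool" where
  "is_maximal_sector H \<sigma> H' h r \<longleftrightarrow> is_sector H \<sigma> H' h r \<and> inv \<sigma> h \<notin> H'"

definition swap_perm :: "'a \<Rightarrow> 'a \<Rightarrow> 'a \<Rightarrow> 'a" where
  "swap_perm a b x = (if x = a then b else if x = b then a else x)"

text \<open>The graded generalized Kauer move of the sector (h,r). Since H and iota are
  unchanged, the move acts on the triple (sigma, m, d).\<close>

definition kauer_move ::
  "('a \<Rightarrow> 'a) \<Rightarrow> ('a \<Rightarrow> 'a) \<times> ('a \<Rightarrow> nat) \<times> ('a \<Rightarrow> bit) \<Rightarrow> 'a \<Rightarrow> nat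
   \<Rightarrow> ('a \<Rightarrow> 'a) \<times> ('a \<Rightarrow> nat) \<times> ('a \<Rightarrow> bit)" where
  "kauer_move \<iota> smd h r =
     (let \<sigma> = fst smd; m = fst (snd smd); d = snd (snd smd);
          s = (\<lambda>i. (\<sigma> ^^ i) h);
          e = s (Suc r);
          ie = \<iota> e;
          hm = inv \<sigma> h;
          \<epsilon> = (if \<iota> e = e then (1::bit) else 0);
          S = (\<Sum>i\<le>r. d (s i));
          \<sigma>' = swap_perm h e \<circ> \<sigma> \<circ> swap_perm (s r) ie;
          m' = (\<lambda>x. if (\<exists>i\<le>r. x = s i) then m ie else m x);
          d_ie = - S - \<epsilon>;
          d' = (\<lambda>x. if x = ie then d_ie
                    else if x = s r then
                      (if ie \<noteq> hm then d ie + d (s r) + \<epsilon>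
                       else (d hm + S) + d (s r) + \<epsilon>)
                    else if x = hm then
                      (if ie \<noteq> hm then d hm + S else d_ie)
                    else d x)
      in (\<sigma>', m', d'))"

end

theory Submission
  imports Defs
begin

definition dmove :: "('a \<Rightarrow> 'a) \<Rightarrow> ('a \<Rightarrow> bit) \<Rightarrow> 'a \<Rightarrow> 'a \<Rightarrow> 'a \<Rightarrow> bit \<Rightarrow> 'a \<Rightarrow> bit" where
  "dmove \<iota> d sr e hm S x =
     (let ie = \<iota> e; \<epsilon> = (if \<iota> e = e then (1::bit) else 0); d_ie = - S - \<epsilon> in
     if x = ie then d_ie
                    else if x = sr then
                      (if ie \<noteq> hm then d ie + d sr + \<epsilon>
                       else (d hm + S) + d sr + \<epsilon>)
                    else if x = hm then
                      (if ie \<noteq> hm then d hm + S else d_ie)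
                    else d x)"

definition core :: "('a \<Rightarrow> 'a) \<Rightarrow> ('a \<Rightarrow> 'a) \<Rightarrow> ('a \<Rightarrow> nat) \<Rightarrow> ('a \<Rightarrow> bit) \<Rightarrow> 'a \<Rightarrow> 'a \<Rightarrow> 'a \<Rightarrow> 'a \<Rightarrow> 'a set \<Rightarrow> bit
   \<Rightarrow> ('a \<Rightarrow> 'a) \<times> ('a \<Rightarrow> nat) \<times> ('a \<Rightarrow> bit)" where
  "core \<iota> \<sigma> m d h sr e hm seg S =
     (swap_perm h e \<circ> \<sigma> \<circ> swap_perm sr (\<iota> e),
      (\<lambda>x. if x \<in> seg then m (\<iota> e) else m x),
      dmove \<iota> d sr e hm S)"

lemma kauer_core: "kauer_move \<iota> (\<sigma>,m,d) h r = core \<iota> \<sigma> m d h ((\<sigma>^^r) h) ((\<sigma>^^Suc r) h) (inv \<sigma> h)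
   {x. \<exists>i\<le>r. x = (\<sigma>^^i) h} (\<Sum>i\<le>r. d ((\<sigma>^^i) h))"
  unfolding kauer_move_def core_def dmove_def Let_def mem_Collect_eq fst_conv snd_conv
  by (rule refl)

lemma bit_add_self: "(a::bit) + a = 0" by (cases a) auto
lemma bit_add_self2: "(a::bit) + (a + b) = b" by (cases a) auto

lemma dmove_comm:
  fixes d :: "'a \<Rightarrow> bit"
  assumes "sr1\<in>P" "sr2\<in>P" "e1\<notin>P" "\<iota> e1 \<notin>P" "hm1\<notin>P" "e2\<notin>P" "\<iota> e2\<notin>P" "hm2\<notin>P"
    "sr1\<noteq>sr2" "e1\<noteq>e2" "\<iota> e1 \<noteq> \<iota> e2" "hm1\<noteq>hm2"
  shows "dmove \<iota> (dmove \<iota> d sr2 e2 hm2 S2) sr1 e1 (swap_perm sr2 (\<iota> e2) hm1) S1 x =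
         dmove \<iota> (dmove \<iota> d sr1 e1 hm1 S1) sr2 e2 (swap_perm sr1 (\<iota> e1) hm2) S2 x"
proof -
  define i1 where "i1 = \<iota> e1"
  define i2 where "i2 = \<iota> e2"
  define E1 where "E1 = (if \<iota> e1 = e1 then (1::bit) else 0)"
  define E2 where "E2 = (if \<iota> e2 = e2 then (1::bit) else 0)"
  have dm: "dmove \<iota> d sr e hm S x = (if x = \<iota> e then - S - (if \<iota> e = e then (1::bit) else 0)
                    else if x = sr then
                      (if \<iota> e \<noteq> hm then d (\<iota> e) + d sr + (if \<iota> e = e then (1::bit) else 0)
                       else (d hm + S) + d sr + (if \<iota> e = e then (1::bit) else 0))
                    else if x = hm then
                      (if \<iota> e \<noteq> hm then d hm + S else - S - (if \<iota> e = e then (1::bit) else 0))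
                    else d x)" for d sr e hm S x
    unfolding dmove_def Let_def by simp
  have ne: "sr1 \<noteq> i1" "sr1 \<noteq> i2" "sr1 \<noteq> hm1" "sr1 \<noteq> hm2" "sr2 \<noteq> i1" "sr2 \<noteq> i2" "sr2 \<noteq> hm1" "sr2 \<noteq> hm2"
     "sr1 \<noteq> sr2" "i1 \<noteq> i2" "hm1 \<noteq> hm2"
    using assms unfolding i1_def i2_def by auto
  have x: "x = i1 \<or> x = i2 \<or> x = hm1 \<or> x = hm2 \<or> x = sr1 \<or> x = sr2 \<or> (x \<noteq> i1 \<and> x \<noteq> i2 \<and> x \<noteq> hm1 \<and> x \<noteq> hm2 \<and> x \<noteq> sr1 \<and> x \<noteq> sr2)"
    by blast
  show ?thesis
    unfolding dm i1_def[symmetric] i2_def[symmetric] E1_def[symmetric] E2_def[symmetric] swap_perm_def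
    using ne
    apply (cases "i1 = hm1"; cases "i1 = hm2"; cases "i2 = hm1"; cases "i2 = hm2")
    using x apply -
    apply (elim disjE conjE; simp add: bit_add_self bit_add_self2 add.assoc add.commute add.left_commute del: add_bit_eq_xor)+
    done
qed

lemma core_comm:
  fixes d :: "'a \<Rightarrow> bit"
  assumes "h1\<in>P" "sr1\<in>P" "h2\<in>P" "sr2\<in>P" "e1\<notin>P" "\<iota> e1 \<notin>P" "hm1\<notin>P" "e2\<notin>P" "\<iota> e2\<notin>P" "hm2\<notin>P"
    "h1\<noteq>h2" "h1\<noteq>sr2" "h2\<noteq>sr1" "sr1\<noteq>sr2" "e1\<noteq>e2" "\<iota> e1 \<noteq> \<iota> e2" "hm1\<noteq>hm2"
    "seg1 \<subseteq> P" "seg2 \<subseteq> P" "seg1 \<inter> seg2 = {}"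
  shows "(case core \<iota> \<sigma> m d h2 sr2 e2 hm2 seg2 S2 of (\<sigma>2,m2,d2) \<Rightarrow> core \<iota> \<sigma>2 m2 d2 h1 sr1 e1 (swap_perm sr2 (\<iota> e2) hm1) seg1 S1)
       = (case core \<iota> \<sigma> m d h1 sr1 e1 hm1 seg1 S1 of (\<sigma>1,m1,d1) \<Rightarrow> core \<iota> \<sigma>1 m1 d1 h2 sr2 e2 (swap_perm sr1 (\<iota> e1) hm2) seg2 S2)"
proof -
  have s: "swap_perm h1 e1 \<circ> swap_perm h2 e2 = swap_perm h2 e2 \<circ> swap_perm h1 e1"
    using assms by (auto simp: fun_eq_iff swap_perm_def)
  have s2: "swap_perm sr1 (\<iota> e1) \<circ> swap_perm sr2 (\<iota> e2) = swap_perm sr2 (\<iota> e2) \<circ> swap_perm sr1 (\<iota> e1)"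
    using assms by (auto simp: fun_eq_iff swap_perm_def)
  have sig: "swap_perm h1 e1 \<circ> (swap_perm h2 e2 \<circ> \<sigma> \<circ> swap_perm sr2 (\<iota> e2)) \<circ> swap_perm sr1 (\<iota> e1)
    = swap_perm h2 e2 \<circ> (swap_perm h1 e1 \<circ> \<sigma> \<circ> swap_perm sr1 (\<iota> e1)) \<circ> swap_perm sr2 (\<iota> e2)"
  proof -
    have "swap_perm h1 e1 \<circ> (swap_perm h2 e2 \<circ> \<sigma> \<circ> swap_perm sr2 (\<iota> e2)) \<circ> swap_perm sr1 (\<iota> e1)
      = (swap_perm h1 e1 \<circ> swap_perm h2 e2) \<circ> \<sigma> \<circ> (swap_perm sr2 (\<iota> e2) \<circ> swap_perm sr1 (\<iota> e1))"
      by (simp add: comp_assoc)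
    also have "\<dots> = (swap_perm h2 e2 \<circ> swap_perm h1 e1) \<circ> \<sigma> \<circ> (swap_perm sr1 (\<iota> e1) \<circ> swap_perm sr2 (\<iota> e2))"
      using s s2 by simp
    finally show ?thesis by (simp add: comp_assoc)
  qed
  have mm: "(\<lambda>x. if x \<in> seg1 then (if \<iota> e1 \<in> seg2 then m (\<iota> e2) else m (\<iota> e1)) else if x \<in> seg2 then m (\<iota> e2) else m x)
     = (\<lambda>x. if x \<in> seg2 then (if \<iota> e2 \<in> seg1 then m (\<iota> e1) else m (\<iota> e2)) else if x \<in> seg1 then m (\<iota> e1) else m x)"
    using assms by (auto simp: fun_eq_iff)
  have dd: "dmove \<iota> (dmove \<iota> d sr2 e2 hm2 S2) sr1 e1 (swap_perm sr2 (\<iota> e2) hm1) S1 =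
         dmove \<iota> (dmove \<iota> d sr1 e1 hm1 S1) sr2 e2 (swap_perm sr1 (\<iota> e1) hm2) S2"
    using dmove_comm[OF assms(2,4,5,6,7,8,9,10,14,15,16,17)] by blast
  have mm2: "(\<lambda>x. if x \<in> seg1 then (\<lambda>x. if x \<in> seg2 then m (\<iota> e2) else m x) (\<iota> e1) else (\<lambda>x. if x \<in> seg2 then m (\<iota> e2) else m x) x)
     = (\<lambda>x. if x \<in> seg2 then (\<lambda>x. if x \<in> seg1 then m (\<iota> e1) else m x) (\<iota> e2) else (\<lambda>x. if x \<in> seg1 then m (\<iota> e1) else m x) x)"
    using mm by simp
  show ?thesis
    unfolding core_def prod.case sig mm dd by (rule refl)
qed


lemma seg_disj_aux:
  assumes inj: "inj \<sigma>"
    and s2: "is_sector H \<sigma> H' h2 r2" and m1: "is_maximal_sector H \<sigma> H' h1 r1"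
    and ij: "i < j" "j \<le> r2"
  shows "(\<sigma>^^j) h2 \<noteq> (\<sigma>^^i) h1"
proof
  assume eq: "(\<sigma>^^j) h2 = (\<sigma>^^i) h1"
  define k where "k = j - i - 1"
  have j: "j = i + Suc k" using ij(1) unfolding k_def by simp
  have "(\<sigma>^^j) h2 = (\<sigma>^^i) ((\<sigma>^^Suc k) h2)"
    unfolding j funpow_add by simp
  with eq have "(\<sigma>^^i) ((\<sigma>^^Suc k) h2) = (\<sigma>^^i) h1" by simp
  moreover have "inj (\<sigma>^^i)" using inj by (rule inj_fn)
  ultimately have "(\<sigma>^^Suc k) h2 = h1" by (simp add: inj_eq)
  hence "\<sigma> ((\<sigma>^^k) h2) = h1" by simp
  hence "inv \<sigma> (\<sigma> ((\<sigma>^^k) h2)) = inv \<sigma> h1" by simp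
  hence "(\<sigma>^^k) h2 = inv \<sigma> h1" by (simp only: inv_f_f[OF inj])
  moreover have "k \<le> r2" using ij j by simp
  then have "(\<sigma>^^k) h2 \<in> H'" using s2 unfolding is_sector_def by simp
  moreover have "inv \<sigma> h1 \<notin> H'" using m1 unfolding is_maximal_sector_def by simp
  ultimately show False by simp
qed

lemma sector_unique_r:
  assumes a: "is_sector H \<sigma> H' h r1" and b: "is_sector H \<sigma> H' h r2"
  shows "r1 = r2"
proof (rule ccontr)
  assume "r1 \<noteq> r2"
  then consider "Suc r1 \<le> r2" | "Suc r2 \<le> r1" by linarith
  then show False
  proof cases
    case 1
    have "(\<sigma>^^Suc r1) h \<in> H'" using b 1 unfolding is_sector_def by blast
    moreover have "(\<sigma>^^Suc r1) h \<notin> H'" using a unfolding is_sector_def by simp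
    ultimately show False by simp
  next
    case 2
    have "(\<sigma>^^Suc r2) h \<in> H'" using a 2 unfolding is_sector_def by blast
    moreover have "(\<sigma>^^Suc r2) h \<notin> H'" using b unfolding is_sector_def by simp
    ultimately show False by simp
  qed
qed

lemma seg_disj:
  assumes inj: "inj \<sigma>"
    and m1: "is_maximal_sector H \<sigma> H' h1 r1" and m2: "is_maximal_sector H \<sigma> H' h2 r2"
    and ne: "(h1, r1) \<noteq> (h2, r2)" and ij: "i \<le> r1" "j \<le> r2"
  shows "(\<sigma>^^i) h1 \<noteq> (\<sigma>^^j) h2"
proof -
  have s1: "is_sector H \<sigma> H' h1 r1" using m1 unfolding is_maximal_sector_def by simp
  have s2: "is_sector H \<sigma> H' h2 r2" using m2 unfolding is_maximal_sector_def by simp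
  consider "i < j" | "j < i" | "i = j" by linarith
  then show ?thesis
  proof cases
    case 1 show ?thesis
      using seg_disj_aux[OF inj s2 m1 1 ij(2)] by (rule not_sym)
  next
    case 2 then show ?thesis
      using seg_disj_aux[OF inj s1 m2 2 ij(1)] by simp
  next
    case 3
    show ?thesis
    proof
      assume "(\<sigma>^^i) h1 = (\<sigma>^^j) h2"
      then have "(\<sigma>^^i) h1 = (\<sigma>^^i) h2" using 3 by simp
      moreover have "inj (\<sigma>^^i)" using inj by (rule inj_fn)
      ultimately have hh: "h1 = h2" by (simp add: inj_eq)
      then have "is_sector H \<sigma> H' h1 r2" using s2 by simp
      then have "r1 = r2" using s1 by (rule sector_unique_r[rotated])
      then show False using ne hh by simp
    qed
  qed
qed

lemma swap_perm_inv: "swap_perm a b (swap_perm a b x) = x"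
  by (simp add: swap_perm_def)

lemma inj_swap_perm: "inj (swap_perm a b)"
  by (rule inj_on_inverseI[where g = "swap_perm a b"]) (simp add: swap_perm_inv)

lemma second_move:
  fixes H H' :: "'a set" and \<iota> \<sigma> :: "'a \<Rightarrow> 'a" and m :: "'a \<Rightarrow> nat"
    and d :: "'a \<Rightarrow> bit" and h1 h2 :: 'a and r1 r2 :: nat
  assumes inj: "inj \<sigma>" and surj: "\<And>x. \<sigma> (inv \<sigma> x) = x"
    and invol: "\<And>x. \<iota> (\<iota> x) = x"
    and HH: "\<iota> ` H' \<subseteq> H'"
    and m1: "is_maximal_sector H \<sigma> H' h1 r1"
    and m2: "is_maximal_sector H \<sigma> H' h2 r2"
    and ne: "(h1, r1) \<noteq> (h2, r2)"
  shows "kauer_move \<iota> (kauer_move \<iota> (\<sigma>, m, d) h2 r2) h1 r1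
     = (case core \<iota> \<sigma> m d h2 ((\<sigma>^^r2) h2) ((\<sigma>^^Suc r2) h2) (inv \<sigma> h2)
                {x. \<exists>i\<le>r2. x = (\<sigma>^^i) h2} (\<Sum>i\<le>r2. d ((\<sigma>^^i) h2)) of
         (\<sigma>2,m2,d2) \<Rightarrow> core \<iota> \<sigma>2 m2 d2 h1 ((\<sigma>^^r1) h1) ((\<sigma>^^Suc r1) h1)
             (swap_perm ((\<sigma>^^r2) h2) (\<iota> ((\<sigma>^^Suc r2) h2)) (inv \<sigma> h1))
             {x. \<exists>i\<le>r1. x = (\<sigma>^^i) h1} (\<Sum>i\<le>r1. d ((\<sigma>^^i) h1)))"
proof -
  define sr2 where "sr2 = (\<sigma>^^r2) h2"
  define e2 where "e2 = (\<sigma>^^Suc r2) h2"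
  define hm2 where "hm2 = inv \<sigma> h2"
  define seg2 where "seg2 = {x. \<exists>i\<le>r2. x = (\<sigma>^^i) h2}"
  define S2 where "S2 = (\<Sum>i\<le>r2. d ((\<sigma>^^i) h2))"
  define \<sigma>2 where "\<sigma>2 = swap_perm h2 e2 \<circ> \<sigma> \<circ> swap_perm sr2 (\<iota> e2)"
  define m2' where "m2' = (\<lambda>x. if x \<in> seg2 then m (\<iota> e2) else m x)"
  define d2 where "d2 = dmove \<iota> d sr2 e2 hm2 S2"
  have k2: "kauer_move \<iota> (\<sigma>, m, d) h2 r2 = (\<sigma>2, m2', d2)"
    unfolding kauer_core \<sigma>2_def m2'_def d2_def core_def sr2_def e2_def hm2_def seg2_def S2_def by (rule refl)
  have inH'1: "i \<le> r1 \<Longrightarrow> (\<sigma>^^i) h1 \<in> H'" for i using m1 unfolding is_maximal_sector_def is_sector_def by simp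
  have inH'2: "i \<le> r2 \<Longrightarrow> (\<sigma>^^i) h2 \<in> H'" for i using m2 unfolding is_maximal_sector_def is_sector_def by simp
  have e1n: "(\<sigma>^^Suc r1) h1 \<notin> H'" using m1 unfolding is_maximal_sector_def is_sector_def by simp
  have e2n: "e2 \<notin> H'" using m2 unfolding e2_def is_maximal_sector_def is_sector_def by simp
  have ie2n: "\<iota> e2 \<notin> H'"
  proof
    assume "\<iota> e2 \<in> H'" then have "\<iota> (\<iota> e2) \<in> H'" using HH by blast
    then show False using invol e2n by simp
  qed
  have hm1n: "inv \<sigma> h1 \<notin> H'" using m1 unfolding is_maximal_sector_def by simp
  have hm2n: "hm2 \<notin> H'" using m2 unfolding hm2_def is_maximal_sector_def by simp
  have dj: "i \<le> r1 \<Longrightarrow> j \<le> r2 \<Longrightarrow> (\<sigma>^^i) h1 \<noteq> (\<sigma>^^j) h2" for i j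
    using seg_disj[OF inj m1 m2 ne] by blast
  have pw: "i \<le> Suc r1 \<Longrightarrow> (\<sigma>2^^i) h1 = (\<sigma>^^i) h1" for i
  proof (induction i)
    case 0 then show ?case by simp
  next
    case (Suc i)
    then have ii: "i \<le> r1" by simp
    have a1: "(\<sigma>^^i) h1 \<noteq> sr2" using dj[OF ii, of r2] unfolding sr2_def by simp
    have a2: "(\<sigma>^^i) h1 \<noteq> \<iota> e2" using inH'1[OF ii] ie2n by (metis)
    have b1: "(\<sigma>^^Suc i) h1 \<noteq> h2"
    proof (cases "Suc i \<le> r1")
      case True then show ?thesis using dj[OF True, of 0] by simp
    next
      case False then have "Suc i = Suc r1" using Suc by simp
      then show ?thesis using e1n inH'2[of 0] by auto
    qed
    have b2: "(\<sigma>^^Suc i) h1 \<noteq> e2"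
    proof
      assume "(\<sigma>^^Suc i) h1 = e2"
      then have "\<sigma> ((\<sigma>^^i) h1) = \<sigma> sr2" unfolding e2_def sr2_def by simp
      then have "(\<sigma>^^i) h1 = sr2" using inj by (meson injD)
      then show False using a1 by simp
    qed
    have "(\<sigma>2^^Suc i) h1 = \<sigma>2 ((\<sigma>^^i) h1)" using Suc by simp
    also have "\<dots> = (\<sigma>^^Suc i) h1"
      unfolding \<sigma>2_def using a1 a2 b1 b2 by (simp add: swap_perm_def)
    finally show ?case .
  qed
  have hm1': "inv \<sigma>2 h1 = swap_perm sr2 (\<iota> e2) (inv \<sigma> h1)"
  proof -
    have injs: "inj \<sigma>2" unfolding \<sigma>2_def
      using inj inj_swap_perm by (metis inj_compose)
    have h1ne: "h1 \<noteq> h2" "h1 \<noteq> e2" using dj[of 0 0] inH'1[of 0] e2n by auto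
    have "\<sigma>2 (swap_perm sr2 (\<iota> e2) (inv \<sigma> h1)) = h1"
      unfolding \<sigma>2_def using surj h1ne by (simp add: swap_perm_inv) (simp add: swap_perm_def)
    then show ?thesis using injs by (metis inv_f_f)
  qed
  have segeq: "{x. \<exists>i\<le>r1. x = (\<sigma>2^^i) h1} = {x. \<exists>i\<le>r1. x = (\<sigma>^^i) h1}"
    using pw by auto
  have Seq: "(\<Sum>i\<le>r1. d2 ((\<sigma>2^^i) h1)) = (\<Sum>i\<le>r1. d ((\<sigma>^^i) h1))"
  proof (rule sum.cong)
    fix i assume "i \<in> {..r1}"
    then have ii: "i \<le> r1" by simp
    have "(\<sigma>^^i) h1 \<noteq> sr2" using dj[OF ii, of r2] unfolding sr2_def by simp
    moreover have "(\<sigma>^^i) h1 \<noteq> \<iota> e2" "(\<sigma>^^i) h1 \<noteq> hm2" using inH'1[OF ii] ie2n hm2n by auto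
    ultimately show "d2 ((\<sigma>2^^i) h1) = d ((\<sigma>^^i) h1)"
      unfolding d2_def dmove_def Let_def using pw ii by simp
  qed simp
  have p1: "(\<sigma>2^^r1) h1 = (\<sigma>^^r1) h1" by (rule pw) simp
  have p2: "(\<sigma>2^^Suc r1) h1 = (\<sigma>^^Suc r1) h1" by (rule pw) simp
  have K1: "kauer_move \<iota> (\<sigma>2, m2', d2) h1 r1
     = core \<iota> \<sigma>2 m2' d2 h1 ((\<sigma>^^r1) h1) ((\<sigma>^^Suc r1) h1) (swap_perm sr2 (\<iota> e2) (inv \<sigma> h1))
          {x. \<exists>i\<le>r1. x = (\<sigma>^^i) h1} (\<Sum>i\<le>r1. d ((\<sigma>^^i) h1))"
    unfolding kauer_core segeq Seq hm1' p1 p2 by (rule refl)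
  have c2: "core \<iota> \<sigma> m d h2 ((\<sigma>^^r2) h2) ((\<sigma>^^Suc r2) h2) (inv \<sigma> h2)
                {x. \<exists>i\<le>r2. x = (\<sigma>^^i) h2} (\<Sum>i\<le>r2. d ((\<sigma>^^i) h2)) = (\<sigma>2, m2', d2)"
    unfolding core_def \<sigma>2_def m2'_def d2_def sr2_def e2_def hm2_def seg2_def S2_def by (rule refl)
  show ?thesis
    using K1 unfolding k2 c2 prod.case sr2_def e2_def .
qed

theorem proposition3p15:
  fixes H H' :: "'a set" and \<iota> \<sigma> :: "'a \<Rightarrow> 'a" and m :: "'a \<Rightarrow> nat"
    and d :: "'a \<Rightarrow> bit" and h1 h2 :: 'a and r1 r2 :: nat
  assumes "skew_brauer_graph H \<iota> \<sigma> m"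
    and "H' \<subseteq> H" and "\<iota> ` H' \<subseteq> H'"
    and "is_maximal_sector H \<sigma> H' h1 r1"
    and "is_maximal_sector H \<sigma> H' h2 r2"
    and "(h1, r1) \<noteq> (h2, r2)"
    and "zero_homogeneous H \<sigma> d"
  shows "kauer_move \<iota> (kauer_move \<iota> (\<sigma>, m, d) h2 r2) h1 r1
       = kauer_move \<iota> (kauer_move \<iota> (\<sigma>, m, d) h1 r1) h2 r2"
proof -
  have sperm: "\<sigma> permutes H" and iperm: "\<iota> permutes H" and iinv: "\<forall>h\<in>H. \<iota> (\<iota> h) = h"
    using assms(1) unfolding skew_brauer_graph_def by simp_all
  have bij: "bij \<sigma>" by (rule permutes_bij[OF sperm])
  have inj: "inj \<sigma>" using bij by (rule bij_is_inj)
  have surj: "\<And>x. \<sigma> (inv \<sigma> x) = x" using bij by (meson bij_is_surj surj_f_inv_f)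
  have invol: "\<And>x. \<iota> (\<iota> x) = x"
  proof -
    fix x show "\<iota> (\<iota> x) = x"
    proof (cases "x \<in> H")
      case True then show ?thesis using iinv by simp
    next
      case False then have "\<iota> x = x" by (rule permutes_not_in[OF iperm])
      then show ?thesis by simp
    qed
  qed
  have ne': "(h2, r2) \<noteq> (h1, r1)" using assms(6) by auto
  define sr1 where "sr1 = (\<sigma>^^r1) h1"
  define e1 where "e1 = (\<sigma>^^Suc r1) h1"
  define hm1 where "hm1 = inv \<sigma> h1"
  define seg1 where "seg1 = {x. \<exists>i\<le>r1. x = (\<sigma>^^i) h1}"
  define S1 where "S1 = (\<Sum>i\<le>r1. d ((\<sigma>^^i) h1))"
  define sr2 where "sr2 = (\<sigma>^^r2) h2"
  define e2 where "e2 = (\<sigma>^^Suc r2) h2"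
  define hm2 where "hm2 = inv \<sigma> h2"
  define seg2 where "seg2 = {x. \<exists>i\<le>r2. x = (\<sigma>^^i) h2}"
  define S2 where "S2 = (\<Sum>i\<le>r2. d ((\<sigma>^^i) h2))"
  have L: "kauer_move \<iota> (kauer_move \<iota> (\<sigma>, m, d) h2 r2) h1 r1 =
     (case core \<iota> \<sigma> m d h2 sr2 e2 hm2 seg2 S2 of (\<sigma>2,m2,d2) \<Rightarrow> core \<iota> \<sigma>2 m2 d2 h1 sr1 e1 (swap_perm sr2 (\<iota> e2) hm1) seg1 S1)"
    unfolding sr1_def e1_def hm1_def seg1_def S1_def sr2_def e2_def hm2_def seg2_def S2_def
    by (rule second_move[OF inj surj invol assms(3,4,5,6)])
  have R: "kauer_move \<iota> (kauer_move \<iota> (\<sigma>, m, d) h1 r1) h2 r2 =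
     (case core \<iota> \<sigma> m d h1 sr1 e1 hm1 seg1 S1 of (\<sigma>1,m1,d1) \<Rightarrow> core \<iota> \<sigma>1 m1 d1 h2 sr2 e2 (swap_perm sr1 (\<iota> e1) hm2) seg2 S2)"
    unfolding sr1_def e1_def hm1_def seg1_def S1_def sr2_def e2_def hm2_def seg2_def S2_def
    by (rule second_move[OF inj surj invol assms(3,5,4) ne'])
  have inH'1: "i \<le> r1 \<Longrightarrow> (\<sigma>^^i) h1 \<in> H'" for i using assms(4) unfolding is_maximal_sector_def is_sector_def by simp
  have inH'2: "i \<le> r2 \<Longrightarrow> (\<sigma>^^i) h2 \<in> H'" for i using assms(5) unfolding is_maximal_sector_def is_sector_def by simp
  have e1n: "e1 \<notin> H'" using assms(4) unfolding e1_def is_maximal_sector_def is_sector_def by simp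
  have e2n: "e2 \<notin> H'" using assms(5) unfolding e2_def is_maximal_sector_def is_sector_def by simp
  have ien: "\<iota> e \<notin> H'" if "e \<notin> H'" for e
  proof
    assume "\<iota> e \<in> H'" then have "\<iota> (\<iota> e) \<in> H'" using assms(3) by blast
    then show False using invol that by simp
  qed
  have hm1n: "hm1 \<notin> H'" using assms(4) unfolding hm1_def is_maximal_sector_def by simp
  have hm2n: "hm2 \<notin> H'" using assms(5) unfolding hm2_def is_maximal_sector_def by simp
  have dj: "i \<le> r1 \<Longrightarrow> j \<le> r2 \<Longrightarrow> (\<sigma>^^i) h1 \<noteq> (\<sigma>^^j) h2" for i j
    using seg_disj[OF inj assms(4,5,6)] by blast
  have h12: "h1 \<noteq> h2" "h1 \<noteq> sr2" "h2 \<noteq> sr1" "sr1 \<noteq> sr2"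
    unfolding sr1_def sr2_def using dj[of 0 0] dj[of 0 r2] dj[of r1 0] dj[of r1 r2] by auto
  have e12: "e1 \<noteq> e2"
  proof
    assume "e1 = e2" then have "\<sigma> sr1 = \<sigma> sr2" unfolding e1_def e2_def sr1_def sr2_def by simp
    then show False using inj h12(4) by (meson injD)
  qed
  have ie12: "\<iota> e1 \<noteq> \<iota> e2" using e12 invol by metis
  have hm12: "hm1 \<noteq> hm2" using surj h12(1) unfolding hm1_def hm2_def by metis
  have sg: "seg1 \<subseteq> H'" "seg2 \<subseteq> H'" "seg1 \<inter> seg2 = {}"
    unfolding seg1_def seg2_def using inH'1 inH'2 dj by auto
  have f1: "h1 \<in> H'" "sr1 \<in> H'" "h2 \<in> H'" "sr2 \<in> H'"
    using inH'1[of 0] inH'1[of r1] inH'2[of 0] inH'2[of r2] unfolding sr1_def sr2_def by simp_all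
  show ?thesis unfolding L R
    by (rule core_comm[OF f1 e1n ien[OF e1n] hm1n e2n ien[OF e2n] hm2n h12 e12 ie12 hm12 sg])
qed

end
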